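(* Let $G=([n],E)$ be any graph and let $C$ be a cycle in $G$ with an odd number $|C|$ of vertices (identify $C$ with its vertex set). Then the polynomial $\frac{|C|-1}{2}-\sum_{i\in C}x_i$ is $2$-sos modulo $I_G$; consequently the odd cycle inequality $\sum_{i\in C}x_i\le\frac{|C|-1}{2}$ is valid on $\mathrm{TH}_2(I_G)$.
   Context: For a graph $G=([n],E)$, $I_G\subseteq\mathbb R[x_1,\dots,x_n]$ is the ideal generated by $x_i^2-x_i$ for all $i\in[n]$ and $x_ix_j$ for all $\{i,j\}\in E$ (it is the vanishing ideal of the set of characteristic vectors of stable sets of $G$). $\mathbb{R}[\mathbf x]_k$ denotes the polynomials of degree at most $k$. A polynomial $h$ is $k$-sos modulo $I$ if there are $g_1,\dots,g_r\in\mathbb{R}[\mathbf x]_k$ with $h-\sum_i g_i^2\in I$. The $k$-th theta body is $\mathrm{TH}_k(I)=\{p\in\mathbb R^n: l(p)\ge 0$ for every $l\in\mathbb{R}[\mathbf x]_1$ that is $k$-sos modulo $I\}$. *)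

theory Defs
  imports Complex_Main "HOL-Library.Poly_Mapping"
begin

text \<open>Multivariate real polynomials: finitely supported maps from monomials
(finitely supported exponent vectors nat \<Rightarrow>0 nat) to real coefficients.
Variable x_i is indexed by the natural number i; the graph lives on [n] = {1..n}.\<close>

type_synonym mpoly = "(nat \<Rightarrow>\<^sub>0 nat) \<Rightarrow>\<^sub>0 real"

definition Var :: "nat \<Rightarrow> mpoly" where
  "Var i = Poly_Mapping.single (Poly_Mapping.single i 1) 1"

definition Const :: "real \<Rightarrow> mpoly" where
  "Const c = Poly_Mapping.single 0 c"

definition mdeg :: "(nat \<Rightarrow>\<^sub>0 nat) \<Rightarrow> nat" where
  "mdeg m = (\<Sum>i\<in>Poly_Mapping.keys m. Poly_Mapping.lookup m i)"

definition polys :: "nat \<Rightarrow> mpoly set" where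
  "polys n = {p. \<forall>m\<in>Poly_Mapping.keys p. Poly_Mapping.keys m \<subseteq> {1..n}}"

definition polys_deg :: "nat \<Rightarrow> nat \<Rightarrow> mpoly set" where
  "polys_deg n k = {p \<in> polys n. \<forall>m\<in>Poly_Mapping.keys p. mdeg m \<le> k}"

definition ideal_gen :: "nat \<Rightarrow> mpoly set \<Rightarrow> mpoly set" where
  "ideal_gen n S = {p. \<exists>F q. finite F \<and> F \<subseteq> S \<and> (\<forall>g\<in>F. q g \<in> polys n)
                          \<and> p = (\<Sum>g\<in>F. q g * g)}"

definition is_graph :: "nat \<Rightarrow> nat set set \<Rightarrow> bool" where
  "is_graph n E \<longleftrightarrow> E \<subseteq> {{i, j} | i j. i \<in> {1..n} \<and> j \<in> {1..n} \<and> i \<noteq> j}"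

definition I_G :: "nat \<Rightarrow> nat set set \<Rightarrow> mpoly set" where
  "I_G n E = ideal_gen n ({Var i * Var i - Var i | i. i \<in> {1..n}}
                           \<union> {Var i * Var j | i j. {i, j} \<in> E})"

definition k_sos_mod :: "nat \<Rightarrow> nat \<Rightarrow> mpoly set \<Rightarrow> mpoly \<Rightarrow> bool" where
  "k_sos_mod n k I h \<longleftrightarrow> h \<in> polys n \<and>
     (\<exists>gs. set gs \<subseteq> polys_deg n k \<and> h - (\<Sum>g\<leftarrow>gs. g * g) \<in> I)"

definition eval :: "mpoly \<Rightarrow> (nat \<Rightarrow> real) \<Rightarrow> real" where
  "eval p x = (\<Sum>m\<in>Poly_Mapping.keys p. Poly_Mapping.lookup p m * (\<Prod>i\<in>Poly_Mapping.keys m. x i ^ Poly_Mapping.lookup m i))"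

text \<open>Points of R^n are functions nat \<Rightarrow> real vanishing outside {1..n}.\<close>
definition TH :: "nat \<Rightarrow> nat \<Rightarrow> mpoly set \<Rightarrow> (nat \<Rightarrow> real) set" where
  "TH n k I = {p. (\<forall>i. i \<notin> {1..n} \<longrightarrow> p i = 0) \<and>
      (\<forall>l \<in> polys_deg n 1. k_sos_mod n k I l \<longrightarrow> eval l p \<ge> 0)}"

definition is_cycle :: "nat set set \<Rightarrow> nat list \<Rightarrow> bool" where
  "is_cycle E cs \<longleftrightarrow> distinct cs \<and> length cs \<ge> 3 \<and>
     (\<forall>i < length cs. {cs ! i, cs ! ((i + 1) mod length cs)} \<in> E)"

end

theory Submission
  imports Defs
begin

lemma sum_closed:
  assumes "0 \<in> P" "\<And>a b. a \<in> P \<Longrightarrow> b \<in> P \<Longrightarrow> a + b \<in> P" "\<And>i. i \<in> A \<Longrightarrow> f i \<in> P"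
  shows "sum f A \<in> P"
proof (cases "finite A")
  case True
  then show ?thesis using assms(3)
    by (induction A rule: finite_induct) (auto intro: assms(1,2))
qed (simp add: assms(1))

lemma mdeg_superset:
  assumes "finite K" "Poly_Mapping.keys m \<subseteq> K"
  shows "mdeg m = (\<Sum>i\<in>K. Poly_Mapping.lookup m i)"
  unfolding mdeg_def
  by (rule sum.mono_neutral_left) (auto simp: assms in_keys_iff)

lemma mdeg_add: "mdeg (a + b) = mdeg a + mdeg b"
proof -
  let ?K = "Poly_Mapping.keys a \<union> Poly_Mapping.keys b"
  have "mdeg (a + b) = (\<Sum>i\<in>?K. Poly_Mapping.lookup (a+b) i)"
    by (rule mdeg_superset) (auto dest: set_mp[OF keys_add])
  also have "\<dots> = (\<Sum>i\<in>?K. Poly_Mapping.lookup a i) + (\<Sum>i\<in>?K. Poly_Mapping.lookup b i)"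
    by (simp add: lookup_add sum.distrib)
  also have "\<dots> = mdeg a + mdeg b"
    using mdeg_superset[of ?K a] mdeg_superset[of ?K b] by simp
  finally show ?thesis .
qed

lemma keys_add_nat: "Poly_Mapping.keys (a + b) \<subseteq> Poly_Mapping.keys a \<union> Poly_Mapping.keys (b::nat \<Rightarrow>\<^sub>0 nat)"
  by (rule keys_add)

lemma polys_deg_polys: "p \<in> polys_deg n k \<Longrightarrow> p \<in> polys n"
  by (simp add: polys_deg_def)

lemma polys_deg_mono: "p \<in> polys_deg n k \<Longrightarrow> k \<le> k' \<Longrightarrow> p \<in> polys_deg n k'"
  by (auto simp: polys_deg_def)

lemma polys_deg_zero: "0 \<in> polys_deg n k"
  by (simp add: polys_deg_def polys_def)

lemma polys_deg_one: "1 \<in> polys_deg n k"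
  by (simp add: polys_deg_def polys_def mdeg_def)

lemma polys_deg_Const: "Const c \<in> polys_deg n k"
  by (simp add: polys_deg_def polys_def mdeg_def Const_def)

lemma polys_deg_Var: "i \<in> {1..n} \<Longrightarrow> Var i \<in> polys_deg n 1"
  by (simp add: polys_deg_def polys_def mdeg_def Var_def)

lemma polys_deg_add: "p \<in> polys_deg n k \<Longrightarrow> q \<in> polys_deg n k \<Longrightarrow> p + q \<in> polys_deg n k"
  unfolding polys_deg_def polys_def using keys_add[of p q] by blast

lemma polys_deg_uminus: "p \<in> polys_deg n k \<Longrightarrow> - p \<in> polys_deg n k"
  unfolding polys_deg_def polys_def by simp

lemma polys_deg_diff: "p \<in> polys_deg n k \<Longrightarrow> q \<in> polys_deg n k \<Longrightarrow> p - q \<in> polys_deg n k"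
  using polys_deg_add[OF _ polys_deg_uminus] by (metis diff_conv_add_uminus)

lemma polys_deg_mult:
  assumes "p \<in> polys_deg n k1" "q \<in> polys_deg n k2"
  shows "p * q \<in> polys_deg n (k1 + k2)"
  unfolding polys_deg_def polys_def
proof (intro CollectI conjI ballI)
  fix m assume "m \<in> Poly_Mapping.keys (p * q)"
  then obtain a b where ab: "m = a + b" "a \<in> Poly_Mapping.keys p" "b \<in> Poly_Mapping.keys q"
    using keys_mult by blast
  show "Poly_Mapping.keys m \<subseteq> {1..n}"
    using ab assms keys_add[of a b] unfolding polys_deg_def polys_def by blast
  show "mdeg m \<le> k1 + k2"
    using ab assms unfolding polys_deg_def by (simp add: mdeg_add add_mono)
qed

lemma polys_iff_deg: "p \<in> polys n \<longleftrightarrow> (\<exists>k. p \<in> polys_deg n k)"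
proof
  assume p: "p \<in> polys n"
  have "p \<in> polys_deg n (Max (mdeg ` Poly_Mapping.keys p))"
    using p by (auto simp: polys_deg_def)
  then show "\<exists>k. p \<in> polys_deg n k" ..
qed (auto simp: polys_deg_def)

lemma polys_add: "p \<in> polys n \<Longrightarrow> q \<in> polys n \<Longrightarrow> p + q \<in> polys n"
  unfolding polys_def using keys_add[of p q] by blast

lemma polys_mult: "p \<in> polys n \<Longrightarrow> q \<in> polys n \<Longrightarrow> p * q \<in> polys n"
  by (metis polys_iff_deg polys_deg_mult)

lemma polys_uminus: "p \<in> polys n \<Longrightarrow> - p \<in> polys n"
  unfolding polys_def by simp

lemma polys_one: "1 \<in> polys n"
  using polys_deg_one polys_deg_polys by blast

lemma ideal_zero: "0 \<in> ideal_gen n S"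
  unfolding ideal_gen_def by (rule CollectI, rule exI[of _ "{}"]) auto

lemma ideal_gen_in: "g \<in> S \<Longrightarrow> g \<in> ideal_gen n S"
  unfolding ideal_gen_def
  by (rule CollectI, rule exI[of _ "{g}"], rule exI[of _ "\<lambda>_. 1"]) (auto simp: polys_one)

lemma ideal_add:
  assumes "p \<in> ideal_gen n S" "r \<in> ideal_gen n S"
  shows "p + r \<in> ideal_gen n S"
proof -
  obtain F q where F: "finite F" "F \<subseteq> S" "\<forall>g\<in>F. q g \<in> polys n" "p = (\<Sum>g\<in>F. q g * g)"
    using assms(1) unfolding ideal_gen_def by blast
  obtain F' q' where F': "finite F'" "F' \<subseteq> S" "\<forall>g\<in>F'. q' g \<in> polys n" "r = (\<Sum>g\<in>F'. q' g * g)"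
    using assms(2) unfolding ideal_gen_def by blast
  define Q where "Q g = (if g \<in> F then q g else 0) + (if g \<in> F' then q' g else 0)" for g
  have "p = (\<Sum>g\<in>F. (if g \<in> F then q g else 0) * g)" by (simp add: F(4))
  also have "\<dots> = (\<Sum>g\<in>F \<union> F'. (if g \<in> F then q g else 0) * g)"
    by (rule sum.mono_neutral_left) (use F F' in auto)
  finally have 1: "p = (\<Sum>g\<in>F \<union> F'. (if g \<in> F then q g else 0) * g)" .
  have "r = (\<Sum>g\<in>F'. (if g \<in> F' then q' g else 0) * g)" by (simp add: F'(4))
  also have "\<dots> = (\<Sum>g\<in>F \<union> F'. (if g \<in> F' then q' g else 0) * g)"
    by (rule sum.mono_neutral_left) (use F F' in auto)
  finally have 2: "r = (\<Sum>g\<in>F \<union> F'. (if g \<in> F' then q' g else 0) * g)" .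
  from 1 2 have "p + r = (\<Sum>g\<in>F \<union> F'. Q g * g)"
    by (simp only: Q_def distrib_right sum.distrib)
  moreover have "\<forall>g\<in>F \<union> F'. Q g \<in> polys n"
  proof
    fix g assume "g \<in> F \<union> F'"
    have z: "(0::mpoly) \<in> polys n" by (simp add: polys_def)
    show "Q g \<in> polys n" unfolding Q_def
    proof (rule polys_add)
      show "(if g \<in> F then q g else 0) \<in> polys n" using F(3) z by simp
      show "(if g \<in> F' then q' g else 0) \<in> polys n" using F'(3) z by simp
    qed
  qed
  ultimately have "finite (F \<union> F') \<and> F \<union> F' \<subseteq> S \<and> (\<forall>g\<in>F \<union> F'. Q g \<in> polys n) \<and> p + r = (\<Sum>g\<in>F \<union> F'. Q g * g)"
    using F(1,2) F'(1,2) by simp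
  then show ?thesis unfolding ideal_gen_def
    by (intro CollectI exI[of _ "F \<union> F'"] exI[of _ Q])
qed

lemma ideal_mult:
  assumes "r \<in> polys n" "p \<in> ideal_gen n S"
  shows "r * p \<in> ideal_gen n S"
proof -
  obtain F q where F: "finite F" "F \<subseteq> S" "\<forall>g\<in>F. q g \<in> polys n" "p = (\<Sum>g\<in>F. q g * g)"
    using assms(2) unfolding ideal_gen_def by blast
  have "r * p = (\<Sum>g\<in>F. (r * q g) * g)"
    unfolding F(4) sum_distrib_left by (simp only: mult.assoc)
  moreover have "\<forall>g\<in>F. r * q g \<in> polys n" using F(3) assms(1) by (simp add: polys_mult)
  ultimately have "finite F \<and> F \<subseteq> S \<and> (\<forall>g\<in>F. r * q g \<in> polys n) \<and> r * p = (\<Sum>g\<in>F. (r * q g) * g)"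
    using F(1,2) by simp
  then show ?thesis unfolding ideal_gen_def
    by (intro CollectI exI[of _ F] exI[of _ "\<lambda>g. r * q g"])
qed

lemma ideal_uminus: "p \<in> ideal_gen n S \<Longrightarrow> - p \<in> ideal_gen n S"
  using ideal_mult[OF polys_uminus[OF polys_one], of p n S] by simp

lemma ideal_diff: "p \<in> ideal_gen n S \<Longrightarrow> q \<in> ideal_gen n S \<Longrightarrow> p - q \<in> ideal_gen n S"
  by (metis diff_conv_add_uminus ideal_add ideal_uminus)

lemma ideal_sum_list: "(\<And>x. x \<in> set xs \<Longrightarrow> f x \<in> ideal_gen n S) \<Longrightarrow> sum_list (map f xs) \<in> ideal_gen n S"
  by (induction xs) (auto intro: ideal_add ideal_zero)

definition mon :: "(nat \<Rightarrow>\<^sub>0 nat) \<Rightarrow> (nat \<Rightarrow> real) \<Rightarrow> real" where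
  "mon m x = (\<Prod>i\<in>Poly_Mapping.keys m. x i ^ Poly_Mapping.lookup m i)"

lemma eval_superset:
  assumes "finite K" "Poly_Mapping.keys p \<subseteq> K"
  shows "eval p x = (\<Sum>m\<in>K. Poly_Mapping.lookup p m * mon m x)"
  unfolding eval_def mon_def
  by (rule sum.mono_neutral_left) (auto simp: assms in_keys_iff)

lemma eval_add: "eval (p + q) x = eval p x + eval q x"
proof -
  let ?K = "Poly_Mapping.keys p \<union> Poly_Mapping.keys q"
  have "eval (p + q) x = (\<Sum>m\<in>?K. Poly_Mapping.lookup (p+q) m * mon m x)"
    by (rule eval_superset) (use keys_add[of p q] in auto)
  also have "\<dots> = (\<Sum>m\<in>?K. Poly_Mapping.lookup p m * mon m x) + (\<Sum>m\<in>?K. Poly_Mapping.lookup q m * mon m x)"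
    by (simp add: lookup_add sum.distrib distrib_right)
  also have "\<dots> = eval p x + eval q x"
    using eval_superset[of ?K p x] eval_superset[of ?K q x] by simp
  finally show ?thesis .
qed

lemma eval_uminus: "eval (- p) x = - eval p x"
  unfolding eval_def by (simp add: sum_negf)

lemma eval_diff: "eval (p - q) x = eval p x - eval q x"
  by (metis diff_conv_add_uminus eval_add eval_uminus)

lemma eval_zero: "eval 0 x = 0"
  by (simp add: eval_def)

lemma eval_sum: "eval (sum f A) x = (\<Sum>i\<in>A. eval (f i) x)"
proof (cases "finite A")
  case True
  then show ?thesis by (induction A rule: finite_induct) (auto simp: eval_zero eval_add)
qed (simp add: eval_zero)

lemma eval_Var: "eval (Var i) x = x i"
  by (simp add: eval_def Var_def)

lemma eval_Const: "eval (Const c) x = c"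
  by (simp add: eval_def Const_def)

lemma Const_nat: "Const (real k) = of_nat k"
  by (metis Const_def comp_apply of_nat_single)

lemma polys_Var: "i \<in> {1..n} \<Longrightarrow> Var i \<in> polys n"
  using polys_deg_Var polys_deg_polys by blast

lemma IG_add: "p \<in> I_G n E \<Longrightarrow> q \<in> I_G n E \<Longrightarrow> p + q \<in> I_G n E"
  unfolding I_G_def by (rule ideal_add)

lemma IG_diff: "p \<in> I_G n E \<Longrightarrow> q \<in> I_G n E \<Longrightarrow> p - q \<in> I_G n E"
  unfolding I_G_def by (rule ideal_diff)

lemma IG_uminus: "p \<in> I_G n E \<Longrightarrow> - p \<in> I_G n E"
  unfolding I_G_def by (rule ideal_uminus)

lemma IG_mult: "r \<in> polys n \<Longrightarrow> p \<in> I_G n E \<Longrightarrow> r * p \<in> I_G n E"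
  unfolding I_G_def by (rule ideal_mult)

lemma IG_sum_list: "(\<And>x. x \<in> set xs \<Longrightarrow> f x \<in> I_G n E) \<Longrightarrow> sum_list (map f xs) \<in> I_G n E"
  unfolding I_G_def by (rule ideal_sum_list)

lemma gen_sq: "i \<in> {1..n} \<Longrightarrow> Var i * Var i - Var i \<in> I_G n E"
  unfolding I_G_def by (rule ideal_gen_in) blast

lemma gen_edge: "{i, j} \<in> E \<Longrightarrow> Var i * Var j \<in> I_G n E"
  unfolding I_G_def by (rule ideal_gen_in) blast

definition idem :: "nat \<Rightarrow> nat set set \<Rightarrow> mpoly \<Rightarrow> bool" where
  "idem n E P \<longleftrightarrow> P * P - P \<in> I_G n E"

lemma idem_mult:
  assumes "P \<in> polys n" "Q \<in> polys n" "idem n E P" "idem n E Q"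
  shows "idem n E (P * Q)"
proof -
  have "(P * Q) * (P * Q) - P * Q = (Q * Q) * (P * P - P) + P * (Q * Q - Q)"
    by (simp add: algebra_simps)
  moreover have "(Q * Q) * (P * P - P) \<in> I_G n E"
    using assms unfolding idem_def I_G_def by (intro ideal_mult polys_mult) auto
  moreover have "P * (Q * Q - Q) \<in> I_G n E"
    using assms unfolding idem_def I_G_def by (intro ideal_mult) auto
  ultimately show ?thesis unfolding idem_def I_G_def by (simp add: ideal_add)
qed

lemma idem_Var: "i \<in> {1..n} \<Longrightarrow> idem n E (Var i)"
  unfolding idem_def using gen_sq by blast

lemma idem_1minus: "i \<in> {1..n} \<Longrightarrow> idem n E (1 - Var i)"
proof -
  assume i: "i \<in> {1..n}"
  have eq: "(1 - Var i) * (1 - Var i) - (1 - Var i) = Var i * Var i - Var i"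
    by (simp add: algebra_simps)
  show ?thesis unfolding idem_def eq by (rule gen_sq[OF i])
qed

lemma idem_edge:
  assumes "b \<in> {1..n}" "c \<in> {1..n}" "{b, c} \<in> E"
  shows "idem n E (1 - Var b - Var c)"
proof -
  have eq: "(1 - Var b - Var c) * (1 - Var b - Var c) - (1 - Var b - Var c)
      = (Var b * Var b - Var b) + (Var c * Var c - Var c) + (1 + 1) * (Var b * Var c)"
    by (simp add: algebra_simps)
  have two: "(1 + 1 :: mpoly) \<in> polys n" by (intro polys_add polys_one)
  have "(Var b * Var b - Var b) + (Var c * Var c - Var c) + (1 + 1) * (Var b * Var c) \<in> I_G n E"
    by (rule IG_add[OF IG_add[OF gen_sq[OF assms(1)] gen_sq[OF assms(2)]] IG_mult[OF two gen_edge[OF assms(3)]]])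
  then show ?thesis unfolding idem_def eq .
qed

lemma split_odd: "(\<Sum>i<2*k+1. f i) = f 0 + (\<Sum>j<k. f (2*j+1) + f (2*j+2))"
  for f :: "nat \<Rightarrow> 'a::comm_monoid_add"
proof (induction k)
  case 0 then show ?case by simp
next
  case (Suc k)
  have "(\<Sum>i<2*Suc k+1. f i) = (\<Sum>i<2*k+1. f i) + f (2*k+1) + f (2*k+2)"
    by (simp add: ac_simps)
  then show ?case using Suc by (simp add: ac_simps)
qed

lemma shift_sum: "(\<Sum>j<k. f (2*j+2) + f (2*j+3)) + f 1 + f (2*k+2) = (\<Sum>j<Suc k. f (2*j+1) + f (2*j+2))"
  for f :: "nat \<Rightarrow> 'a::comm_ring_1"
proof (induction k)
  case 0 then show ?case by simp
next
  case (Suc k)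
  then show ?case by (simp add: algebra_simps numeral_3_eq_3)
qed

lemma sum_lin: "(\<Sum>j<K. c * (1 - a j - b j)) = c * (of_nat K - (\<Sum>j<K. a j + b j))"
  for c :: "'a::comm_ring_1"
  by (induction K) (simp_all add: algebra_simps)

lemma sum_list_upt: "sum_list (map f [0..<k]) = (\<Sum>j<k. f j)"
  by (induction k) auto


theorem mainTheorem7:
  fixes n :: nat and E :: "nat set set" and cs :: "nat list"
  assumes "is_graph n E"
    and "is_cycle E cs"
    and "odd (length cs)"
  shows "k_sos_mod n 2 (I_G n E)
           (Const ((real (length cs) - 1) / 2) - (\<Sum>i\<in>set cs. Var i))
         \<and> (\<forall>p \<in> TH n 2 (I_G n E). (\<Sum>i\<in>set cs. p i) \<le> (real (length cs) - 1) / 2)"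
proof -
  define m where "m = length cs"
  have dist: "distinct cs" and m3: "m \<ge> 3"
    and edges: "\<And>i. i < m \<Longrightarrow> {cs ! i, cs ! ((i + 1) mod m)} \<in> E"
    using assms(2) unfolding is_cycle_def m_def by auto
  obtain q where q: "m = 2 * q + 1" using assms(3) unfolding m_def by (rule oddE)
  define k' where "k' = q - 1"
  have mk: "m = 2 * k' + 3" using q m3 unfolding k'_def by linarith
  have vin: "cs ! i \<in> {1..n}" if "i < m" for i
  proof -
    have "{cs ! i, cs ! ((i + 1) mod m)} \<in> E" using edges that .
    then obtain a b where "{cs ! i, cs ! ((i + 1) mod m)} = {a, b}" "a \<in> {1..n}" "b \<in> {1..n}"
      using assms(1) unfolding is_graph_def by blast
    moreover have "cs ! i \<in> {cs ! i, cs ! ((i + 1) mod m)}" by simp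
    ultimately show ?thesis by auto
  qed
  define X where "X i = Var (cs ! i)" for i
  have Xdeg: "X i \<in> polys_deg n 1" if "i < m" for i
    unfolding X_def using polys_deg_Var vin that by blast
  have Xp: "X i \<in> polys n" if "i < m" for i
    using Xdeg polys_deg_polys that by blast
  have edge: "idem n E (1 - X i - X (i + 1))" if "i + 1 < m" for i
  proof -
    have "i < m" using that by simp
    then have "{cs ! i, cs ! ((i + 1) mod m)} \<in> E" by (rule edges)
    then have "{cs ! i, cs ! (i + 1)} \<in> E" using that by simp
    then show ?thesis unfolding X_def using that vin by (intro idem_edge) auto
  qed
  have edgep: "1 - X i - X (i + 1) \<in> polys_deg n 1" if "i + 1 < m" for i
    using that Xdeg by (intro polys_deg_diff polys_deg_one) auto
  define A where "A j = (1 - X 0) * (1 - X (2*j+1) - X (2*j+2))" for j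
  define B where "B j = X 0 * (1 - X (2*j+2) - X (2*j+3))" for j
  define gs where "gs = map A [0..<Suc k'] @ map B [0..<k']"
  have P0: "1 - X 0 \<in> polys_deg n 1" using Xdeg mk by (intro polys_deg_diff polys_deg_one) auto
  have Aj: "A j = (1 - X 0) * (1 - X (2*j+1) - X (2*j+1+1))" for j
    unfolding A_def by (simp add: add.assoc)
  have Bj: "B j = X 0 * (1 - X (2*j+2) - X (2*j+2+1))" for j
  proof -
    have e: "2*j+2+1 = 2*j+(3::nat)" by simp
    show ?thesis unfolding B_def e ..
  qed
  have gcases: "(\<exists>j. j < Suc k' \<and> g = A j) \<or> (\<exists>j. j < k' \<and> g = B j)" if "g \<in> set gs" for g
    using that unfolding gs_def by (auto simp del: upt_Suc)
  have Adeg: "A j \<in> polys_deg n 2" and Aidem: "idem n E (A j)" if "j < Suc k'" for j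
  proof -
    have lt: "2*j+1+1 < m" using that mk by simp
    have ep: "1 - X (2*j+1) - X (2*j+1+1) \<in> polys_deg n 1" using lt by (rule edgep)
    have ei: "idem n E (1 - X (2*j+1) - X (2*j+1+1))" using lt by (rule edge)
    have i0: "idem n E (1 - X 0)" unfolding X_def using vin mk by (intro idem_1minus) auto
    show "A j \<in> polys_deg n 2" unfolding Aj using polys_deg_mult[OF P0 ep] by (simp only: one_add_one)
    show "idem n E (A j)" unfolding Aj
      by (rule idem_mult[OF polys_deg_polys[OF P0] polys_deg_polys[OF ep] i0 ei])
  qed
  have Bdeg: "B j \<in> polys_deg n 2" and Bidem: "idem n E (B j)" if "j < k'" for j
  proof -
    have lt: "2*j+2+1 < m" using that mk by simp
    have ep: "1 - X (2*j+2) - X (2*j+2+1) \<in> polys_deg n 1" using lt by (rule edgep)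
    have ei: "idem n E (1 - X (2*j+2) - X (2*j+2+1))" using lt by (rule edge)
    have m0: "0 < m" using mk by simp
    have i0: "idem n E (X 0)" unfolding X_def using vin[OF m0] by (rule idem_Var)
    show "B j \<in> polys_deg n 2" unfolding Bj using polys_deg_mult[OF Xdeg[OF m0] ep] by (simp only: one_add_one)
    show "idem n E (B j)" unfolding Bj
      by (rule idem_mult[OF Xp[OF m0] polys_deg_polys[OF ep] i0 ei])
  qed
  have gsdeg: "set gs \<subseteq> polys_deg n 2"
    using gcases Adeg Bdeg by blast
  have gsidem: "g * g - g \<in> I_G n E" if "g \<in> set gs" for g
    using gcases[OF that] Aidem Bidem unfolding idem_def by blast
  define h where "h = Const ((real (length cs) - 1) / 2) - (\<Sum>i\<in>set cs. Var i)"
  define S where "S = (\<Sum>j<Suc k'. X (2*j+1) + X (2*j+2))"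
  define T where "T = (\<Sum>j<k'. X (2*j+2) + X (2*j+3))"
  have hS: "h = of_nat (Suc k') - X 0 - S"
  proof -
    have r: "(real (length cs) - 1) / 2 = real (Suc k')" using mk unfolding m_def by simp
    have c: "Const ((real (length cs) - 1) / 2) = of_nat (Suc k')"
      unfolding r by (rule Const_nat)
    have "(\<Sum>i\<in>set cs. Var i) = (\<Sum>i<m. X i)"
      unfolding X_def m_def using dist
      by (simp add: sum.distinct_set_conv_list sum_list_sum_nth atLeast0LessThan)
    moreover have "(\<Sum>i<m. X i) = X 0 + S"
      unfolding S_def using split_odd[where k="Suc k'" and f=X] mk by (simp add: numeral_3_eq_3)
    ultimately show ?thesis unfolding h_def c by simp
  qed
  have ST: "T + X 1 + X (2*k'+2) = S"
    unfolding S_def T_def by (rule shift_sum)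
  have sumgs: "sum_list gs = (1 - X 0) * (of_nat (Suc k') - S) + X 0 * (of_nat k' - T)"
    unfolding gs_def S_def T_def A_def B_def
    by (simp only: sum_list_append sum_list_upt sum_lin)
  have hdiff: "h - sum_list gs = - (X 0 * X 1) - X (2*k'+2) * X 0"
    unfolding hS sumgs ST[symmetric] by (simp add: algebra_simps)
  have e01: "X 0 * X 1 \<in> I_G n E"
    unfolding X_def using edges[of 0] mk by (intro gen_edge) auto
  have e20: "X (2*k'+2) * X 0 \<in> I_G n E"
  proof -
    have md: "(2*k'+2+1) mod m = 0" using mk by (simp add: numeral_3_eq_3)
    have "2*k'+2 < m" using mk by simp
    from edges[OF this] have "{cs ! (2*k'+2), cs ! 0} \<in> E" unfolding md .
    then show ?thesis unfolding X_def by (rule gen_edge)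
  qed
  have hI: "h - sum_list gs \<in> I_G n E"
    unfolding hdiff by (intro IG_diff IG_uminus e01 e20)
  have sq: "(\<Sum>g\<leftarrow>gs. g * g) = sum_list gs + (\<Sum>g\<leftarrow>gs. g * g - g)"
    by (simp add: sum_list_subtractf)
  have cert: "h - (\<Sum>g\<leftarrow>gs. g * g) \<in> I_G n E"
    unfolding sq using IG_diff[OF hI IG_sum_list[of gs "\<lambda>g. g * g - g", OF gsidem]]
    by (simp add: algebra_simps)
  have hdeg: "h \<in> polys_deg n 1"
    unfolding h_def
  proof (rule polys_deg_diff[OF polys_deg_Const])
    show "(\<Sum>i\<in>set cs. Var i) \<in> polys_deg n 1"
    proof (rule sum_closed[OF polys_deg_zero polys_deg_add])
      fix i assume "i \<in> set cs"
      then obtain j where "j < m" "i = cs ! j" unfolding m_def by (auto simp: in_set_conv_nth)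
      then show "Var i \<in> polys_deg n 1" using vin polys_deg_Var by blast
    qed
  qed
  have ksos: "k_sos_mod n 2 (I_G n E) h"
    unfolding k_sos_mod_def using hdeg polys_deg_polys gsdeg cert by blast
  moreover have "\<forall>p \<in> TH n 2 (I_G n E). (\<Sum>i\<in>set cs. p i) \<le> (real (length cs) - 1) / 2"
  proof
    fix p assume "p \<in> TH n 2 (I_G n E)"
    then have "eval h p \<ge> 0" using hdeg ksos unfolding TH_def by blast
    moreover have "eval h p = (real (length cs) - 1) / 2 - (\<Sum>i\<in>set cs. p i)"
      unfolding h_def by (simp add: eval_diff eval_Const eval_sum eval_Var)
    ultimately show "(\<Sum>i\<in>set cs. p i) \<le> (real (length cs) - 1) / 2" by simp
  qed
  ultimately show ?thesis unfolding h_def by blast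
qed

end
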